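(* Let $G$ be a strategic game with players $1,\dots,n$ and $\phi=(\phi_1,\dots,\phi_n)$ with each $\phi_i$ a positive optimality condition for player $i$. Then for every belief model $(\Omega,\bar s_1,\dots,\bar s_n,P_1,\dots,P_n)$ for $G$, $$[\![\mathit{rat}_\phi]\!]\cap[\![\Box^*\mathit{rat}_\phi]\!]\subseteq[\![\nu X.\,O_\phi X]\!],$$ i.e. the formula $(\mathit{rat}_\phi\wedge\Box^*\mathit{rat}_\phi)\rightarrow\nu X.O_\phi X$ is valid.
   Context: Strategic game: $G=(T_1,\dots,T_n,<_1,\dots,<_n)$ with arbitrary nonempty strategy sets $T_i$ and $<_i$ a total linear order on $T=\prod_i T_i$; $\ge_i$ its reflexive closure. Notation $s_{-i}$, $(s_i,t_{-i})$ as usual. A restriction is $S=(S_1,\dots,S_n)$ with $S_i\subseteq T_i$. $\mathcal{L}_O$: first-order formulas from atoms $C(a)$, $a\ge^i_c b$ ($a,b,c$ variables or constant $o$) with $\neg,\wedge,\exists$. For an optimality model $(G,G',s)$ ($G'$ a restriction, $s\in T$) and assignment $\alpha$ (variables to $T$, $o\mapsto s$): $C(x)$ holds iff $\alpha(x)_j\in G'_j$ for all $j$; $x\ge^i_z y$ holds iff $(\alpha(x)_i,\alpha(z)_{-i})\ge_i(\alpha(y)_i,\alpha(z)_{-i})$. An optimality condition for $i$ is a closed $\mathcal{L}_O$-formula using only $\ge^i$; it is positive if every $C(\cdot)$ occurs under an even number of negations. Belief model: $(\Omega,\bar s_1,\dots,\bar s_n,P_1,\dots,P_n)$, $\Omega\ne\emptyset$,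 $\bar s_i:\Omega\to T_i$, $P_i:\Omega\to 2^\Omega$; $\bar s(\omega)=(\bar s_i(\omega))_i$; $(G_E)_i=\{\bar s_i(u):u\in E\}$ for $E\subseteq\Omega$. $\mathcal{L}_\nu$: $\psi::=\mathit{rat}_{\phi_i}\mid X\mid\psi\wedge\psi\mid\neg\psi\mid\Box_i\psi\mid O_{\phi_i}\psi\mid\nu X.\psi$ ($\nu$-free body). Semantics $[\![\psi]\!]_E\subseteq\Omega$ for $E\subseteq\Omega$: $[\![\mathit{rat}_{\phi_i}]\!]_E=\{\omega:(G,G_{P_i(\omega)},\bar s(\omega))\models\phi_i\}$; $[\![X]\!]_E=E$; $\wedge,\neg$ as intersection and complement; $[\![\Box_i\psi]\!]_E=\{\omega:P_i(\omega)\subseteq[\![\psi]\!]_E\}$; $[\![O_{\phi_i}\psi]\!]_E=\{\omega:(G,G_{[\![\psi]\!]_E},\bar s(\omega))\models\phi_i\}$; $[\![\nu X.\psi]\!]_E$ is the outcome of the operator $F\mapsto[\![\psi]\!]_F\cap F$ on $\mathcal P(\Omega)$. Here the outcome of an operator $O$ on a complete lattice with top $\top$ is $O^{\alpha}$ for the least ordinal $\alpha$ with $O^{\alpha+1}=O^\alpha$, where $O^0=\top$, $O^{\alpha+1}=O(O^\alpha)$, $O^\beta=\bigcap_{\alpha<\beta}O^\alpha$ for limit $\beta$. For formulas without free $X$ write $[\![\psi]\!]$. Abbreviations $\mathit{rat}_\phi=\bigwedge_i\mathit{rat}_{\phi_i}$, $\Box\psi=\bigwedge_i\Box_i\psi$,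 $O_\phi\psi=\bigwedge_iO_{\phi_i}\psi$, $\Box^*\psi:=\nu X.\Box(X\wedge\psi)$. A formula is valid if its interpretation is $\Omega$ in every belief model for $G$. *)

theory Defs
  imports Main "HOL-Library.FuncSet"
begin

text \<open>Players are 0,...,n-1. A strategy profile is an extensional function
  on {..<n} with values in the strategy sets T i. The reflexive order
  ge i (= \<ge>_i, reflexive closure of the total linear order <_i) is a linear
  order on the set of profiles.\<close>

definition profiles :: "nat \<Rightarrow> (nat \<Rightarrow> 'a set) \<Rightarrow> (nat \<Rightarrow> 'a) set" where
  "profiles n T = Pi\<^sub>E {..<n} T"

definition game :: "nat \<Rightarrow> (nat \<Rightarrow> 'a set) \<Rightarrow> (nat \<Rightarrow> (nat \<Rightarrow> 'a) \<Rightarrow> (nat \<Rightarrow> 'a) \<Rightarrow> bool) \<Rightarrow> bool" where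
  "game n T ge \<longleftrightarrow>
     (\<forall>i<n. T i \<noteq> {}) \<and>
     (\<forall>i<n. (\<forall>s\<in>profiles n T. ge i s s) \<and>
            (\<forall>s\<in>profiles n T. \<forall>t\<in>profiles n T. \<forall>u\<in>profiles n T. ge i s t \<longrightarrow> ge i t u \<longrightarrow> ge i s u) \<and>
            (\<forall>s\<in>profiles n T. \<forall>t\<in>profiles n T. ge i s t \<longrightarrow> ge i t s \<longrightarrow> s = t) \<and>
            (\<forall>s\<in>profiles n T. \<forall>t\<in>profiles n T. ge i s t \<or> ge i t s))"

datatype tm = TV nat | TO   \<comment> \<open>variables and the constant o\<close>

datatype ofm =
    C tm
  | Ge nat tm tm tm        \<comment> \<open>Ge i a c b  is  a \<ge>^i_c b\<close>
  | ONeg ofm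
  | OAnd ofm ofm
  | OEx nat ofm

fun tmv :: "(nat \<Rightarrow> (nat \<Rightarrow> 'a)) \<Rightarrow> (nat \<Rightarrow> 'a) \<Rightarrow> tm \<Rightarrow> (nat \<Rightarrow> 'a)" where
  "tmv \<alpha> s (TV x) = \<alpha> x"
| "tmv \<alpha> s TO = s"

text \<open>Satisfaction in the optimality model (G, S, s) under assignment \<alpha>.
  (x_i, z_{-i}) is z(i := x i).\<close>
fun osat :: "nat \<Rightarrow> (nat \<Rightarrow> 'a set) \<Rightarrow> (nat \<Rightarrow> (nat \<Rightarrow> 'a) \<Rightarrow> (nat \<Rightarrow> 'a) \<Rightarrow> bool)
   \<Rightarrow> (nat \<Rightarrow> 'a set) \<Rightarrow> (nat \<Rightarrow> 'a) \<Rightarrow> (nat \<Rightarrow> (nat \<Rightarrow> 'a)) \<Rightarrow> ofm \<Rightarrow> bool" where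
  "osat n T ge S s \<alpha> (C a) = (\<forall>j<n. tmv \<alpha> s a j \<in> S j)"
| "osat n T ge S s \<alpha> (Ge i a c b) =
     ge i ((tmv \<alpha> s c)(i := tmv \<alpha> s a i)) ((tmv \<alpha> s c)(i := tmv \<alpha> s b i))"
| "osat n T ge S s \<alpha> (ONeg \<phi>) = (\<not> osat n T ge S s \<alpha> \<phi>)"
| "osat n T ge S s \<alpha> (OAnd \<phi> \<psi>) = (osat n T ge S s \<alpha> \<phi> \<and> osat n T ge S s \<alpha> \<psi>)"
| "osat n T ge S s \<alpha> (OEx x \<phi>) = (\<exists>t\<in>profiles n T. osat n T ge S s (\<alpha>(x := t)) \<phi>)"

fun tfv :: "tm \<Rightarrow> nat set" where
  "tfv (TV x) = {x}"
| "tfv TO = {}"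

fun ofv :: "ofm \<Rightarrow> nat set" where
  "ofv (C a) = tfv a"
| "ofv (Ge i a c b) = tfv a \<union> tfv c \<union> tfv b"
| "ofv (ONeg \<phi>) = ofv \<phi>"
| "ofv (OAnd \<phi> \<psi>) = ofv \<phi> \<union> ofv \<psi>"
| "ofv (OEx x \<phi>) = ofv \<phi> - {x}"

fun only_player :: "nat \<Rightarrow> ofm \<Rightarrow> bool" where
  "only_player i (C a) = True"
| "only_player i (Ge j a c b) = (j = i)"
| "only_player i (ONeg \<phi>) = only_player i \<phi>"
| "only_player i (OAnd \<phi> \<psi>) = (only_player i \<phi> \<and> only_player i \<psi>)"
| "only_player i (OEx x \<phi>) = only_player i \<phi>"

fun pos_pol :: "bool \<Rightarrow> ofm \<Rightarrow> bool" where
  "pos_pol b (C a) = b"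
| "pos_pol b (Ge j a c c') = True"
| "pos_pol b (ONeg \<phi>) = pos_pol (\<not> b) \<phi>"
| "pos_pol b (OAnd \<phi> \<psi>) = (pos_pol b \<phi> \<and> pos_pol b \<psi>)"
| "pos_pol b (OEx x \<phi>) = pos_pol b \<phi>"

definition positive :: "ofm \<Rightarrow> bool" where
  "positive \<phi> = pos_pol True \<phi>"

definition optimality_condition :: "nat \<Rightarrow> ofm \<Rightarrow> bool" where
  "optimality_condition i \<phi> \<longleftrightarrow> ofv \<phi> = {} \<and> only_player i \<phi>"

text \<open>(G, S, s) |= \<phi> for a closed formula (the assignment is irrelevant;
  we use the one sending every variable to s, which lies in T).\<close>
definition opt_models :: "nat \<Rightarrow> (nat \<Rightarrow> 'a set) \<Rightarrow> (nat \<Rightarrow> (nat \<Rightarrow> 'a) \<Rightarrow> (nat \<Rightarrow> 'a) \<Rightarrow> bool)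
   \<Rightarrow> (nat \<Rightarrow> 'a set) \<Rightarrow> (nat \<Rightarrow> 'a) \<Rightarrow> ofm \<Rightarrow> bool" where
  "opt_models n T ge S s \<phi> = osat n T ge S s (\<lambda>_. s) \<phi>"

text \<open>sb \<omega> is the profile (\<bar>s_i(\<omega>))_i.\<close>
definition belief_model :: "nat \<Rightarrow> (nat \<Rightarrow> 'a set) \<Rightarrow> 'w set \<Rightarrow> ('w \<Rightarrow> (nat \<Rightarrow> 'a))
   \<Rightarrow> (nat \<Rightarrow> 'w \<Rightarrow> 'w set) \<Rightarrow> bool" where
  "belief_model n T \<Omega> sb P \<longleftrightarrow> \<Omega> \<noteq> {} \<and> (\<forall>\<omega>\<in>\<Omega>. sb \<omega> \<in> profiles n T) \<and>
     (\<forall>i<n. \<forall>\<omega>\<in>\<Omega>. P i \<omega> \<subseteq> \<Omega>)"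

definition GE :: "('w \<Rightarrow> (nat \<Rightarrow> 'a)) \<Rightarrow> 'w set \<Rightarrow> (nat \<Rightarrow> 'a set)" where
  "GE sb E = (\<lambda>i. (\<lambda>\<omega>. sb \<omega> i) ` E)"

text \<open>The transfinite iterates O^\<alpha> (O^0 = top, successor = O, limit =
  intersection) of the operator O on P(\<Omega>) form exactly the least family
  containing \<Omega>, closed under O and under intersections of nonempty
  subfamilies. For the operators used here (F \<mapsto> [\<psi>]_F \<inter> F, which are
  deflationary) this family is a descending chain and its intersection is the
  first stationary iterate, i.e. the outcome.\<close>
inductive_set iter_tower :: "'w set \<Rightarrow> ('w set \<Rightarrow> 'w set) \<Rightarrow> 'w set set"
  for \<Omega> :: "'w set" and Op :: "'w set \<Rightarrow> 'w set" where
  top: "\<Omega> \<in> iter_tower \<Omega> Op"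
| succ: "F \<in> iter_tower \<Omega> Op \<Longrightarrow> Op F \<in> iter_tower \<Omega> Op"
| lim: "(\<And>G. G \<in> S \<Longrightarrow> G \<in> iter_tower \<Omega> Op) \<Longrightarrow> S \<noteq> {} \<Longrightarrow> \<Inter> S \<in> iter_tower \<Omega> Op"

definition outcome :: "'w set \<Rightarrow> ('w set \<Rightarrow> 'w set) \<Rightarrow> 'w set" where
  "outcome \<Omega> Op = \<Inter> (iter_tower \<Omega> Op)"

datatype lnu =
    Rat nat ofm
  | X
  | And lnu lnu
  | Neg lnu
  | Box nat lnu
  | Opt nat ofm lnu
  | Nu lnu

fun nu_free :: "lnu \<Rightarrow> bool" where
  "nu_free (Rat i \<phi>) = True"
| "nu_free X = True"
| "nu_free (And a b) = (nu_free a \<and> nu_free b)"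
| "nu_free (Neg a) = nu_free a"
| "nu_free (Box i a) = nu_free a"
| "nu_free (Opt i \<phi> a) = nu_free a"
| "nu_free (Nu a) = False"

fun wf_lnu :: "lnu \<Rightarrow> bool" where
  "wf_lnu (Rat i \<phi>) = True"
| "wf_lnu X = True"
| "wf_lnu (And a b) = (wf_lnu a \<and> wf_lnu b)"
| "wf_lnu (Neg a) = wf_lnu a"
| "wf_lnu (Box i a) = wf_lnu a"
| "wf_lnu (Opt i \<phi> a) = wf_lnu a"
| "wf_lnu (Nu a) = nu_free a"

primrec sem :: "nat \<Rightarrow> (nat \<Rightarrow> 'a set) \<Rightarrow> (nat \<Rightarrow> (nat \<Rightarrow> 'a) \<Rightarrow> (nat \<Rightarrow> 'a) \<Rightarrow> bool)
   \<Rightarrow> 'w set \<Rightarrow> ('w \<Rightarrow> (nat \<Rightarrow> 'a)) \<Rightarrow> (nat \<Rightarrow> 'w \<Rightarrow> 'w set) \<Rightarrow> 'w set \<Rightarrow> lnu \<Rightarrow> 'w set" where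
  "sem n T ge \<Omega> sb P E (Rat i \<phi>) = {\<omega>\<in>\<Omega>. opt_models n T ge (GE sb (P i \<omega>)) (sb \<omega>) \<phi>}"
| "sem n T ge \<Omega> sb P E X = E"
| "sem n T ge \<Omega> sb P E (And a b) = sem n T ge \<Omega> sb P E a \<inter> sem n T ge \<Omega> sb P E b"
| "sem n T ge \<Omega> sb P E (Neg a) = \<Omega> - sem n T ge \<Omega> sb P E a"
| "sem n T ge \<Omega> sb P E (Box i a) = {\<omega>\<in>\<Omega>. P i \<omega> \<subseteq> sem n T ge \<Omega> sb P E a}"
| "sem n T ge \<Omega> sb P E (Opt i \<phi> a) =
     {\<omega>\<in>\<Omega>. opt_models n T ge (GE sb (sem n T ge \<Omega> sb P E a)) (sb \<omega>) \<phi>}"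
| "sem n T ge \<Omega> sb P E (Nu a) = outcome \<Omega> (\<lambda>F. sem n T ge \<Omega> sb P F a \<inter> F)"

fun bigAnd :: "lnu list \<Rightarrow> lnu" where
  "bigAnd [] = Neg (And X (Neg X))"
| "bigAnd [a] = a"
| "bigAnd (a # as) = And a (bigAnd as)"

definition rat_all :: "nat \<Rightarrow> (nat \<Rightarrow> ofm) \<Rightarrow> lnu" where
  "rat_all n \<phi> = bigAnd (map (\<lambda>i. Rat i (\<phi> i)) [0..<n])"

definition box_all :: "nat \<Rightarrow> lnu \<Rightarrow> lnu" where
  "box_all n \<psi> = bigAnd (map (\<lambda>i. Box i \<psi>) [0..<n])"

definition opt_all :: "nat \<Rightarrow> (nat \<Rightarrow> ofm) \<Rightarrow> lnu \<Rightarrow> lnu" where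
  "opt_all n \<phi> \<psi> = bigAnd (map (\<lambda>i. Opt i (\<phi> i) \<psi>) [0..<n])"

definition box_star :: "nat \<Rightarrow> lnu \<Rightarrow> lnu" where
  "box_star n \<psi> = Nu (box_all n (And X \<psi>))"

end

theory Submission
  imports Defs
begin

lemma bigAnd_sem:
  "(\<forall>x\<in>set xs. sem n T ge \<Omega> sb P E x \<subseteq> \<Omega>) \<Longrightarrow>
   sem n T ge \<Omega> sb P E (bigAnd xs) = \<Omega> \<inter> (\<Inter>x\<in>set xs. sem n T ge \<Omega> sb P E x)"
  by (induction xs rule: bigAnd.induct) auto

lemma pos_mono:
  "pos_pol b \<phi> \<Longrightarrow> (\<forall>j. S j \<subseteq> S' j) \<Longrightarrow>
   (if b then (osat n T ge S s \<alpha> \<phi> \<longrightarrow> osat n T ge S' s \<alpha> \<phi>)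
    else (osat n T ge S' s \<alpha> \<phi> \<longrightarrow> osat n T ge S s \<alpha> \<phi>))"
proof (induction \<phi> arbitrary: b \<alpha>)
  case (C x)
  then show ?case by auto
next
  case (Ge x1a x2 x3 x4)
  then show ?case by auto
next
  case (ONeg \<phi>)
  from ONeg.IH[of "\<not> b"] ONeg.prems show ?case by (auto split: if_splits)
next
  case (OAnd \<phi>1 \<phi>2)
  from OAnd.IH(1)[of b] OAnd.IH(2)[of b] OAnd.prems show ?case by (auto split: if_splits)
next
  case (OEx x1a \<phi>)
  from OEx.IH[of b] OEx.prems show ?case by (cases b) (simp_all, meson+)
qed

lemma outcome_in: "outcome \<Omega> Op \<in> iter_tower \<Omega> Op"
  unfolding outcome_def by (rule iter_tower.lim) (auto intro: iter_tower.top)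

lemma outcome_fix: "outcome \<Omega> Op \<subseteq> Op (outcome \<Omega> Op)"
proof -
  have "Op (outcome \<Omega> Op) \<in> iter_tower \<Omega> Op" by (rule iter_tower.succ[OF outcome_in])
  then show ?thesis unfolding outcome_def by blast
qed

lemma GE_mono: "A \<subseteq> B \<Longrightarrow> \<forall>j. GE sb A j \<subseteq> GE sb B j"
  unfolding GE_def by auto

theorem mainTheorem2:
  fixes n :: nat and T :: "nat \<Rightarrow> 'a set"
    and ge :: "nat \<Rightarrow> (nat \<Rightarrow> 'a) \<Rightarrow> (nat \<Rightarrow> 'a) \<Rightarrow> bool"
    and \<phi> :: "nat \<Rightarrow> ofm"
    and \<Omega> :: "'w set" and sb :: "'w \<Rightarrow> (nat \<Rightarrow> 'a)" and P :: "nat \<Rightarrow> 'w \<Rightarrow> 'w set"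
  assumes "game n T ge"
    and "\<forall>i<n. optimality_condition i (\<phi> i) \<and> positive (\<phi> i)"
    and "belief_model n T \<Omega> sb P"
  shows "sem n T ge \<Omega> sb P \<Omega> (rat_all n \<phi>) \<inter> sem n T ge \<Omega> sb P \<Omega> (box_star n (rat_all n \<phi>))
           \<subseteq> sem n T ge \<Omega> sb P \<Omega> (Nu (opt_all n \<phi> X))"
proof -
  let ?s = "sem n T ge \<Omega> sb P"
  have ratE: "\<And>E. ?s E (rat_all n \<phi>) = \<Omega> \<inter> (\<Inter>i\<in>{..<n}. ?s E (Rat i (\<phi> i)))"
    unfolding rat_all_def by (subst bigAnd_sem) auto
  have boxE: "\<And>E \<psi>. ?s E (box_all n \<psi>) = \<Omega> \<inter> (\<Inter>i\<in>{..<n}. ?s E (Box i \<psi>))"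
    unfolding box_all_def by (subst bigAnd_sem) auto
  have optE: "\<And>E \<psi>. ?s E (opt_all n \<phi> \<psi>) = \<Omega> \<inter> (\<Inter>i\<in>{..<n}. ?s E (Opt i (\<phi> i) \<psi>))"
    unfolding opt_all_def by (subst bigAnd_sem) auto
  define R where "R = ?s \<Omega> (rat_all n \<phi>)"
  define B where "B = ?s \<Omega> (box_star n (rat_all n \<phi>))"
  have Rind: "\<And>E. ?s E (rat_all n \<phi>) = R" unfolding R_def ratE by simp
  have Bfix: "B \<subseteq> ?s B (box_all n (And X (rat_all n \<phi>)))"
  proof -
    have "B \<subseteq> (\<lambda>F. ?s F (box_all n (And X (rat_all n \<phi>))) \<inter> F) B"
      unfolding B_def box_star_def sem.simps(7) by (rule outcome_fix)
    then show ?thesis by simp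
  qed
  have key: "\<And>\<omega> i. \<omega> \<in> B \<Longrightarrow> i < n \<Longrightarrow> P i \<omega> \<subseteq> R \<inter> B"
  proof -
    fix \<omega> i assume "\<omega> \<in> B" "i < n"
    then have "\<omega> \<in> ?s B (Box i (And X (rat_all n \<phi>)))" using Bfix boxE by blast
    then show "P i \<omega> \<subseteq> R \<inter> B" using Rind by auto
  qed
  define Z where "Z = R \<inter> B"
  have "Z \<subseteq> F" if "F \<in> iter_tower \<Omega> (\<lambda>F. ?s F (opt_all n \<phi> X) \<inter> F)" for F
    using that
  proof (induction rule: iter_tower.induct)
    case top
    then show ?case unfolding Z_def R_def ratE by auto
  next
    case (succ F)
    have "Z \<subseteq> ?s F (opt_all n \<phi> X)"
    proof
      fix \<omega> assume w: "\<omega> \<in> Z"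
      then have wO: "\<omega> \<in> \<Omega>" unfolding Z_def R_def ratE by auto
      have "\<omega> \<in> ?s F (Opt i (\<phi> i) X)" if "i < n" for i
      proof -
        have "\<omega> \<in> ?s \<Omega> (Rat i (\<phi> i))" using w that unfolding Z_def R_def ratE by auto
        then have m: "opt_models n T ge (GE sb (P i \<omega>)) (sb \<omega>) (\<phi> i)" by simp
        have "P i \<omega> \<subseteq> F" using key[of \<omega> i] w that succ.IH unfolding Z_def by auto
        then have sub: "\<forall>j. GE sb (P i \<omega>) j \<subseteq> GE sb F j" by (rule GE_mono)
        have "pos_pol True (\<phi> i)" using assms(2) that unfolding positive_def by auto
        from pos_mono[OF this sub] m
        have "opt_models n T ge (GE sb F) (sb \<omega>) (\<phi> i)"
          unfolding opt_models_def by auto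
        then show ?thesis using wO by simp
      qed
      then show "\<omega> \<in> ?s F (opt_all n \<phi> X)" unfolding optE using wO by auto
    qed
    then show ?case using succ.IH by auto
  next
    case (lim S)
    then show ?case by auto
  qed
  then have "Z \<subseteq> outcome \<Omega> (\<lambda>F. ?s F (opt_all n \<phi> X) \<inter> F)"
    unfolding outcome_def by (simp add: Inf_greatest)
  then show ?thesis unfolding Z_def R_def B_def by simp
qed

end
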